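(* Let $\vec d=(\vec a,\vec b)$ be a bidegree sequence of length $n$ with $\sum_i a_i=\sum_i b_i=n\bar c$ and $m:=\min\vec d\le n-1$. Define $k_*=m+1+\sqrt{(m+1)^2+n(\bar c-2m)}$, and let $k=\lceil k_*\rceil$ if $(m+1)^2+n(\bar c-2m)\ge0$ (i.e. $k_*$ is real) and $k=1$ otherwise. If $$\max\vec d\le\min\Big(\Big\lfloor n\frac{\bar c-m}{k}+m\Big\rfloor,\ n-1\Big),$$ then $\vec d$ is graphic.
   Context: A bidegree sequence of length $n$ is a pair $\vec d=(\vec a,\vec b)$ with $\vec a=(a_1,\dots,a_n)\in\mathbb{N}_0^n$ and $\vec b=(b_1,\dots,b_n)\in\mathbb{N}_0^n$. It is graphic with loops if there is an $n\times n$ matrix with entries in $\{0,1\}$ whose $i$th row sum is $a_i$ and whose $i$th column sum is $b_i$ for every $i\in[1..n]$; it is graphic if such a matrix exists with all diagonal entries equal to $0$. $\max\vec d$ and $\min\vec d$ denote the maximum and minimum over all $2n$ entries $a_1,\dots,a_n,b_1,\dots,b_n$. The number $\bar c$ (the average degree) is defined by $\sum_i a_i=\sum_i b_i=n\bar c$. *)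

theory Defs
  imports Complex_Main
begin

text \<open>A bidegree sequence of length n: two functions a b :: nat => nat, only the
values at indices 0..n-1 matter (index i corresponds to i+1 in the paper).\<close>

definition bidegree_sum :: "nat \<Rightarrow> (nat \<Rightarrow> nat) \<Rightarrow> (nat \<Rightarrow> nat) \<Rightarrow> bool" where
  "bidegree_sum n a b \<longleftrightarrow> (\<Sum>i<n. a i) = (\<Sum>i<n. b i)"

definition graphic :: "nat \<Rightarrow> (nat \<Rightarrow> nat) \<Rightarrow> (nat \<Rightarrow> nat) \<Rightarrow> bool" where
  "graphic n a b \<longleftrightarrow> (\<exists>M :: nat \<Rightarrow> nat \<Rightarrow> nat.
      (\<forall>i<n. \<forall>j<n. M i j \<in> {0, 1}) \<and> (\<forall>i<n. M i i = 0) \<and>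
      (\<forall>i<n. (\<Sum>j<n. M i j) = a i) \<and> (\<forall>j<n. (\<Sum>i<n. M i j) = b j))"

definition max_bideg :: "nat \<Rightarrow> (nat \<Rightarrow> nat) \<Rightarrow> (nat \<Rightarrow> nat) \<Rightarrow> nat" where
  "max_bideg n a b = Max (a ` {..<n} \<union> b ` {..<n})"

definition min_bideg :: "nat \<Rightarrow> (nat \<Rightarrow> nat) \<Rightarrow> (nat \<Rightarrow> nat) \<Rightarrow> nat" where
  "min_bideg n a b = Min (a ` {..<n} \<union> b ` {..<n})"

definition avg_deg :: "nat \<Rightarrow> (nat \<Rightarrow> nat) \<Rightarrow> real" where
  "avg_deg n a = real (\<Sum>i<n. a i) / real n"

end

theory Submission
  imports Defs
begin

lemma arith_pos:
  fixes m x u n E k :: int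
  assumes "0 \<le> m" "1 \<le> u" "u \<le> x" "m + x \<le> n - 1" "0 \<le> E" "k*x \<le> E"
    "E \<le> k^2 - 2*(m+1)*k + n*m" "m+1 \<le> k"
  shows "(m+u)*(m+x)*x \<le> n*m*x + E*u - (m+u)*x \<or> (E + (m+u)*m)*x \<le> n*m*x + E*u - (m+u)*x"
proof (rule ccontr)
  assume H: "\<not> ?thesis"
  define w where "w = E-(m+1)*x"
  define v where "v = (m+x+1)*x-E"
  define R1 where "R1 = m*x*(n-m-x-1)"
  define R2 where "R2 = E*x+m*(m+1)*x-n*m*x"
  define K where "K = E*E-(2*m+1)*E*x+n*m*x*x-E*x*x"
  have x0: "0 \<le> x" using assms by linarith
  have f1: "u*v > R1" using H unfolding v_def R1_def by (auto simp: algebra_simps)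
  have f2: "R2 > u*w" using H unfolding w_def R2_def by (auto simp: algebra_simps)
  have "(m+1)*x \<le> k*x" using assms x0 by (simp add: mult_right_mono)
  hence w0: "w \<ge> 0" using assms unfolding w_def by linarith
  have R10: "R1 \<ge> 0" unfolding R1_def using assms x0 by simp
  have v0: "v > 0"
  proof (rule ccontr)
    assume "\<not> v > 0"
    hence "u*v \<le> 0" using assms by (simp add: mult_nonneg_nonpos)
    thus False using f1 R10 by linarith
  qed
  have "u*v*w \<ge> R1*w" using f1 w0 by (simp add: mult_right_mono)
  moreover have "R2*v > u*w*v" using f2 v0 by (simp add: mult_strict_right_mono)
  ultimately have "R2*v - R1*w > 0" by (simp add: algebra_simps)
  moreover have "R2*v - R1*w = -x*K" unfolding R1_def R2_def v_def w_def K_def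
    by (simp add: algebra_simps)
  moreover have "K \<ge> 0"
  proof -
    have "K = (E-k*x)*(E+k*x-(2*m+1)*x) + x*x*(k^2-2*(m+1)*k+n*m + k - E)"
      unfolding K_def by (simp add: algebra_simps power2_eq_square)
    moreover have "(E-k*x)*(E+k*x-(2*m+1)*x) \<ge> 0"
    proof -
      have "(2*m+1)*x \<le> 2*k*x" using assms x0 by (simp add: mult_right_mono)
      hence "E+k*x-(2*m+1)*x \<ge> 0" using assms by linarith
      thus ?thesis using assms by simp
    qed
    moreover have "x*x*(k^2-2*(m+1)*k+n*m + k - E) \<ge> 0" using assms by simp
    ultimately show ?thesis by linarith
  qed
  moreover have "x*K \<ge> 0" using x0 calculation(3) by simp
  ultimately show False by linarith
qed

lemma arith_neg:
  fixes m x u n E :: int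
  assumes "0 \<le> m" "1 \<le> u" "u \<le> x" "m + x \<le> n - 1" "0 \<le> E" "n*m > (m+1)^2 + E"
  shows "(m+u)*(m+x)*x \<le> n*m*x + E*u - E \<or> (E + (m+u)*m)*x \<le> n*m*x + E*u - E"
proof (cases "E \<le> m*x")
  case True
  have "E*(x-u+1) \<le> m*x*(x-u+1)" using True assms by (simp add: mult_right_mono)
  moreover have "m*x*(m+x+1) \<le> m*x*n" using assms by (simp add: mult_left_mono)
  ultimately have "E*(x-u+1) + m*x*(m+u) \<le> n*m*x" by (simp add: algebra_simps)
  thus ?thesis by (simp add: algebra_simps)
next
  case False
  define a where "a = E - m*x"
  define Q where "Q = n*m-m*m"
  define R2 where "R2 = E*(x+1)+m*m*x-n*m*x"
  define R1 where "R1 = n*m*x-E-m*m*x-m*x*x"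
  have a0: "a > 0" using False a_def by simp
  have x1: "x \<ge> 1" using assms by linarith
  have Q: "Q \<ge> 2*m+2+E" using assms unfolding Q_def by (simp add: power2_eq_square algebra_simps)
  show ?thesis
  proof (rule ccontr)
    assume H: "\<not> ?thesis"
    have f1: "u*(x*x-a) > R1" using H unfolding a_def R1_def by (auto simp: algebra_simps)
    have f2: "u*a < R2" using H unfolding a_def R2_def by (auto simp: algebra_simps)
    show False
    proof (cases "x*x \<le> a")
      case True
      hence "u*(x*x-a) \<le> 0" using assms by (simp add: mult_nonneg_nonpos)
      moreover have "R1 > 0"
      proof -
        have "R1 = x*Q - E - m*(x*x)" unfolding R1_def Q_def by (simp add: algebra_simps)
        moreover have "x*Q \<ge> x*(2*m+2+E)" using Q x1 by (simp add: mult_left_mono)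
        moreover have "x*(2*m+2+E) = 2*(m*x) + 2*x + E*x" by (simp add: algebra_simps)
        moreover have "E*(x-1) \<ge> (x*x+m*x)*(x-1)" using True a_def x1 by (simp add: mult_right_mono)
        moreover have "E*(x-1) = E*x - E" by (simp add: algebra_simps)
        moreover have "(x*x+m*x)*(x-1) = x*(x*x) + m*(x*x) - x*x - m*x" by (simp add: algebra_simps)
        moreover have "x*(x*x) \<ge> x*x" using x1 by (simp add: mult_le_cancel_right1)
        moreover have "m*x \<ge> 0" using assms x1 by simp
        ultimately show ?thesis using x1 by linarith
      qed
      ultimately show False using f1 by linarith
    next
      case False
      have "u*(x*x-a)*a > R1*a" using f1 a0 by (simp add: mult_strict_right_mono)
      moreover have "u*a*(x*x-a) < R2*(x*x-a)" using f2 False by (simp add: mult_strict_right_mono)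
      ultimately have "R2*(x*x-a) - R1*a > 0" by (simp add: algebra_simps)
      moreover have "R2*(x*x-a) - R1*a = x*(x*E*(x+1)-x*x*Q-a*a)"
        unfolding R1_def R2_def a_def Q_def by (simp add: algebra_simps)
      moreover have "x*E*(x+1)-x*x*Q-a*a < 0"
      proof -
        have "x*x*Q \<ge> x*x*(2*m+2+E)" using Q by (simp add: mult_left_mono)
        moreover have "x*a \<le> x*x + a*a"
        proof -
          have "0 \<le> (x-a)*(x-a)" by simp
          moreover have "(x-a)*(x-a) = x*x - 2*(x*a) + a*a" by (simp add: algebra_simps)
          moreover have "x*a \<ge> 0" using x1 a0 by simp
          ultimately show ?thesis by linarith
        qed
        moreover have "x*E*(x+1) = x*x*E + x*a + m*(x*x)" unfolding a_def by (simp add: algebra_simps)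
        moreover have "x*x*(2*m+2+E) = 2*(m*(x*x)) + 2*(x*x) + x*x*E" by (simp add: algebra_simps)
        moreover have "m*(x*x) \<ge> 0" "x*x > 0" using assms x1 by auto
        ultimately show ?thesis by linarith
      qed
      moreover have "x*(x*E*(x+1)-x*x*Q-a*a) < 0"
        using calculation(3) x1 by (simp add: mult_pos_neg)
      ultimately show False by linarith
    qed
  qed
qed

definition rs :: "nat \<Rightarrow> (nat\<Rightarrow>nat\<Rightarrow>nat) \<Rightarrow> nat \<Rightarrow> nat" where
  "rs n M i = (\<Sum>j<n. M i j)"
definition cs :: "nat \<Rightarrow> (nat\<Rightarrow>nat\<Rightarrow>nat) \<Rightarrow> nat \<Rightarrow> nat" where
  "cs n M j = (\<Sum>i<n. M i j)"
definition tot :: "nat \<Rightarrow> (nat\<Rightarrow>nat\<Rightarrow>nat) \<Rightarrow> nat" where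
  "tot n M = (\<Sum>i<n. rs n M i)"
definition valid :: "nat \<Rightarrow> (nat\<Rightarrow>nat) \<Rightarrow> (nat\<Rightarrow>nat) \<Rightarrow> (nat\<Rightarrow>nat\<Rightarrow>nat) \<Rightarrow> bool" where
  "valid n a b M \<longleftrightarrow> (\<forall>i<n. \<forall>j<n. M i j \<le> 1) \<and> (\<forall>i<n. M i i = 0) \<and>
     (\<forall>i<n. rs n M i \<le> a i) \<and> (\<forall>j<n. cs n M j \<le> b j)"
definition upd :: "(nat\<Rightarrow>nat\<Rightarrow>nat) \<Rightarrow> nat \<Rightarrow> nat \<Rightarrow> nat \<Rightarrow> nat\<Rightarrow>nat\<Rightarrow>nat" where
  "upd M p q v = (\<lambda>r c. if r = p \<and> c = q then v else M r c)"

inductive walk :: "nat \<Rightarrow> (nat\<Rightarrow>nat\<Rightarrow>nat) \<Rightarrow> nat \<Rightarrow> nat \<Rightarrow> nat \<Rightarrow> bool" for n M where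
  base: "r<n \<Longrightarrow> j<n \<Longrightarrow> r\<noteq>j \<Longrightarrow> M r j = 0 \<Longrightarrow> walk n M r j 0"
| step: "r<n \<Longrightarrow> c<n \<Longrightarrow> r\<noteq>c \<Longrightarrow> M r c = 0 \<Longrightarrow> r'<n \<Longrightarrow> M r' c = 1 \<Longrightarrow>
     walk n M r' j L \<Longrightarrow> walk n M r j (Suc L)"

lemma upd_sum:
  fixes f g :: "nat \<Rightarrow> nat"
  assumes "finite A" "x \<in> A" "\<forall>y\<in>A. y \<noteq> x \<longrightarrow> f y = g y"
  shows "sum f A + g x = sum g A + f x"
proof -
  have "sum f A = f x + sum f (A - {x})" using assms by (simp add: sum.remove)
  moreover have "sum g A = g x + sum g (A - {x})" using assms by (simp add: sum.remove)
  moreover have "sum f (A - {x}) = sum g (A - {x})" using assms by (intro sum.cong) auto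
  ultimately show ?thesis by simp
qed

lemma rs_upd: "p<n \<Longrightarrow> q<n \<Longrightarrow> rs n (upd M p q v) p + M p q = rs n M p + v"
  unfolding rs_def upd_def
  using upd_sum[of "{..<n}" q "M p" "\<lambda>j. if j = q then v else M p j"] by simp
lemma rs_upd_other: "r \<noteq> p \<Longrightarrow> rs n (upd M p q v) r = rs n M r"
  unfolding rs_def upd_def by simp
lemma cs_upd: "p<n \<Longrightarrow> q<n \<Longrightarrow> cs n (upd M p q v) q + M p q = cs n M q + v"
  unfolding cs_def upd_def
  using upd_sum[of "{..<n}" p "\<lambda>i. M i q" "\<lambda>i. if i = p then v else M i q"] by simp
lemma cs_upd_other: "c \<noteq> q \<Longrightarrow> cs n (upd M p q v) c = cs n M c"
  unfolding cs_def upd_def by simp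
lemma tot_upd: "p<n \<Longrightarrow> q<n \<Longrightarrow> tot n (upd M p q v) + M p q = tot n M + v"
proof -
  assume a: "p<n" "q<n"
  have "tot n M + rs n (upd M p q v) p = tot n (upd M p q v) + rs n M p"
    unfolding tot_def using a
    by (intro upd_sum) (auto simp: rs_upd_other)
  thus ?thesis using rs_upd[OF a, of M v] by simp
qed

lemma walk_transfer:
  assumes "walk n M r j L" "\<forall>p q. q \<noteq> c \<longrightarrow> M' p q = M p q"
  shows "walk n M' r j L \<or> j = c \<or> (\<exists>i2 L'. L' < L \<and> i2 < n \<and> M i2 c = 1 \<and> walk n M i2 j L')"
  using assms(1)
proof (induction rule: walk.induct)
  case (base r j)
  then show ?case using assms(2) by (metis walk.base)
next
  case (step r c0 r' j L)
  show ?case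
  proof (cases "c0 = c")
    case True
    have "L < Suc L" by simp
    then show ?thesis using step(5,6,7) True by blast
  next
    case False
    from step.IH show ?thesis
    proof (elim disjE exE conjE)
      assume "walk n M' r' j L"
      hence "walk n M' r j (Suc L)" using step False assms(2) by (intro walk.step[where M=M' and c=c0 and r'=r']) auto
      thus ?thesis by blast
    next
      assume "j = c" thus ?thesis by blast
    next
      fix i2 L' assume "L' < L" "i2 < n" "M i2 c = 1" "walk n M i2 j L'"
      thus ?thesis by (intro disjI2) (rule exI[of _ i2], rule exI[of _ L'], auto)
    qed
  qed
qed

lemma valid_add:
  assumes "valid n a b M" "i<n" "j<n" "i\<noteq>j" "M i j = 0" "rs n M i < a i" "cs n M j < b j"
  shows "valid n a b (upd M i j 1) \<and> tot n (upd M i j 1) = Suc (tot n M)"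
proof -
  have r: "rs n (upd M i j 1) i = Suc (rs n M i)" using rs_upd[of i n j M 1] assms by simp
  have c: "cs n (upd M i j 1) j = Suc (cs n M j)" using cs_upd[of i n j M 1] assms by simp
  have t: "tot n (upd M i j 1) = Suc (tot n M)" using tot_upd[of i n j M 1] assms by simp
  have "valid n a b (upd M i j 1)"
    unfolding valid_def
  proof (intro conjI allI impI)
    fix p q assume "p<n" "q<n" thus "upd M i j 1 p q \<le> 1" using assms unfolding valid_def upd_def by auto
  next
    fix p assume "p<n" thus "upd M i j 1 p p = 0" using assms unfolding valid_def upd_def by auto
  next
    fix p assume "p<n" thus "rs n (upd M i j 1) p \<le> a p" using assms r unfolding valid_def
      by (cases "p = i") (auto simp: rs_upd_other)
  next
    fix q assume "q<n" thus "cs n (upd M i j 1) q \<le> b q" using assms c unfolding valid_def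
      by (cases "q = j") (auto simp: cs_upd_other)
  qed
  thus ?thesis using t by simp
qed

lemma augment:
  "\<And>M i j. valid n a b M \<Longrightarrow> i<n \<Longrightarrow> rs n M i < a i \<Longrightarrow> cs n M j < b j \<Longrightarrow> walk n M i j L \<Longrightarrow>
     \<exists>M'. valid n a b M' \<and> tot n M' = Suc (tot n M)"
proof (induction L rule: less_induct)
  case (less L M i j)
  show ?case
  proof (cases "\<exists>L'<L. walk n M i j L'")
    case True
    then obtain L' where "L' < L" "walk n M i j L'" by blast
    thus ?thesis using less.IH[OF \<open>L' < L\<close> less.prems(1-4)] by blast
  next
    case minimal: False
    from less.prems(5) show ?thesis
    proof (cases rule: walk.cases)
      case base
      have "valid n a b (upd M i j 1) \<and> tot n (upd M i j 1) = Suc (tot n M)"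
        by (rule valid_add) (use less.prems base in auto)
      thus ?thesis by blast
    next
      case (step c r' L1)
      show ?thesis
      proof (cases "c = j")
        case True
        have "valid n a b (upd M i j 1) \<and> tot n (upd M i j 1) = Suc (tot n M)"
          by (rule valid_add) (use less.prems step True in auto)
        thus ?thesis by blast
      next
        case cj: False
        define M1 where "M1 = upd M i c 1"
        define M' where "M' = upd M1 r' c 0"
        have ir: "i \<noteq> r'" using step by auto
        have agree: "\<forall>p q. q \<noteq> c \<longrightarrow> M' p q = M p q" unfolding M'_def M1_def upd_def by auto
        have "walk n M' r' j L1"
        proof -
          from walk_transfer[OF \<open>walk n M r' j L1\<close> agree] cj
          consider "walk n M' r' j L1" | "\<exists>i2 L'. L' < L1 \<and> i2 < n \<and> M i2 c = 1 \<and> walk n M i2 j L'"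
            by blast
          thus ?thesis
          proof cases
            case 2
            then obtain i2 L' where h: "L' < L1" "i2 < n" "M i2 c = 1" "walk n M i2 j L'" by blast
            have "walk n M i j (Suc L')" using step h by (intro walk.step[where M=M and c=c and r'=i2]) auto
            moreover have "Suc L' < L" using h step by simp
            ultimately show ?thesis using minimal by blast
          qed simp
        qed
        have v: "valid n a b M"  using less.prems by simp
        have M1r: "rs n M1 i = Suc (rs n M i)" using rs_upd[of i n c M 1] step unfolding M1_def by simp
        have M1c: "cs n M1 c = Suc (cs n M c)" using cs_upd[of i n c M 1] step unfolding M1_def by simp
        have M1t: "tot n M1 = Suc (tot n M)" using tot_upd[of i n c M 1] step unfolding M1_def by simp
        have M1rc: "M1 r' c = 1" using step ir unfolding M1_def upd_def by simp
        have M'r: "Suc (rs n M' r') = rs n M r'" using rs_upd[of r' n c M1 0] step M1rc ir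
          unfolding M'_def by (simp add: M1_def rs_upd_other)
        have M'c: "cs n M' c = cs n M c" using cs_upd[of r' n c M1 0] step M1rc M1c unfolding M'_def by simp
        have M't: "tot n M' = tot n M" using tot_upd[of r' n c M1 0] step M1rc M1t unfolding M'_def by simp
        have M'i: "rs n M' i = Suc (rs n M i)" using M1r ir unfolding M'_def by (simp add: rs_upd_other)
        have vM': "valid n a b M'"
          unfolding valid_def
        proof (intro conjI allI impI)
          fix p q assume "p<n" "q<n" thus "M' p q \<le> 1" using v unfolding valid_def M'_def M1_def upd_def by auto
        next
          fix p assume "p<n" thus "M' p p = 0" using v step unfolding valid_def M'_def M1_def upd_def by auto
        next
          fix p assume p: "p<n"
          show "rs n M' p \<le> a p"
          proof -
            consider "p = i" | "p = r'" | "p \<noteq> i" "p \<noteq> r'" by blast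
            thus ?thesis
            proof cases
              case 1 thus ?thesis using M'i less.prems by simp
            next
              case 2
              have "rs n M r' \<le> a r'" using v step unfolding valid_def by auto
              thus ?thesis using M'r 2 by simp
            next
              case 3 thus ?thesis using v p unfolding valid_def M'_def M1_def by (simp add: rs_upd_other)
            qed
          qed
        next
          fix q assume q: "q<n"
          show "cs n M' q \<le> b q"
          proof (cases "q = c")
            case True thus ?thesis using M'c v q unfolding valid_def by simp
          next
            case False thus ?thesis using v q unfolding valid_def M'_def M1_def by (simp add: cs_upd_other)
          qed
        qed
        have "rs n M r' \<le> a r'" using v step unfolding valid_def by auto
        hence "rs n M' r' < a r'" using M'r by simp
        moreover have "cs n M' j < b j" using less.prems cj unfolding M'_def M1_def by (simp add: cs_upd_other)
        moreover have "L1 < L" using step by simp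
        ultimately obtain M'' where "valid n a b M''" "tot n M'' = Suc (tot n M')"
          using less.IH[OF \<open>L1 < L\<close> vM' \<open>r' < n\<close> _ _ \<open>walk n M' r' j L1\<close>] step by blast
        thus ?thesis using M't by auto
      qed
    qed
  qed
qed

lemma walk_snoc:
  "walk n M x c L \<Longrightarrow> M r c = 1 \<Longrightarrow> r<n \<Longrightarrow> j<n \<Longrightarrow> r\<noteq>j \<Longrightarrow> M r j = 0 \<Longrightarrow>
   walk n M x j (Suc L)"
proof (induction rule: walk.induct)
  case (base x c)
  have "walk n M r j 0" using base by (intro walk.base) auto
  thus ?case using base by (intro walk.step[where c=c and r'=r]) auto
next
  case (step x c0 r' c L)
  have w: "walk n M r' j (Suc L)" using step by simp
  show ?case by (rule walk.step[where c=c0 and r'=r']) (use step w in auto)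
qed

lemma cut:
  assumes v: "valid n a b M" and mx: "\<forall>M'. valid n a b M' \<longrightarrow> tot n M' \<le> tot n M"
    and i0: "i0 < n" "rs n M i0 < a i0"
  shows "\<exists>S \<subseteq> {..<n}. (\<Sum>r\<in>S. a r) > (\<Sum>j<n. min (b j) (card (S - {j})))"
proof -
  define C where "C = {j. j<n \<and> (\<exists>L. walk n M i0 j L)}"
  define S where "S = insert i0 {r. r<n \<and> (\<exists>c\<in>C. M r c = 1)}"
  have Ssub: "S \<subseteq> {..<n}" unfolding S_def using i0 by auto
  have fS: "finite S" using Ssub finite_subset by blast
  have F1: "cs n M j = b j" if jC: "j \<in> C" for j
  proof (rule ccontr)
    assume "cs n M j \<noteq> b j"
    hence lt: "cs n M j < b j" using v that unfolding valid_def C_def by (simp add: order_le_neq_trans)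
    obtain L where "walk n M i0 j L" using jC unfolding C_def by blast
    with lt obtain M' where "valid n a b M'" "tot n M' = Suc (tot n M)"
      using augment[OF v i0] by blast
    thus False using mx by force
  qed
  have F2: "M r j = 1" if rS: "r \<in> S" and jn: "j<n" and jC: "j \<notin> C" and jr: "j \<noteq> r" for r j
  proof (rule ccontr)
    assume "M r j \<noteq> 1"
    moreover have "r < n" using rS jn jC jr Ssub by auto
    ultimately have M0: "M r j = 0" using v that unfolding valid_def by (metis le_neq_implies_less less_one)
    show False
    proof (cases "r = i0")
      case True
      hence "walk n M i0 j 0" using M0 that i0 by (intro walk.base) auto
      thus False using rS jn jC jr unfolding C_def by blast
    next
      case False
      then obtain c where c: "c \<in> C" "M r c = 1" using rS jn jC jr unfolding S_def by auto
      then obtain L where "walk n M i0 c L" unfolding C_def by blast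
      hence "walk n M i0 j (Suc L)" using walk_snoc c \<open>r<n\<close> that M0 by blast
      thus False using rS jn jC jr unfolding C_def by blast
    qed
  qed
  have F3: "M r j = 0" if "j \<in> C" "r<n" "r \<notin> S" for r j
  proof -
    have "M r j \<noteq> 1" using that unfolding S_def by auto
    moreover have "j < n" using that unfolding C_def by auto
    ultimately show ?thesis using v that unfolding valid_def by (metis le_neq_implies_less less_one)
  qed
  have col: "min (b j) (card (S - {j})) \<le> (\<Sum>r\<in>S. M r j)" if j: "j<n" for j
  proof (cases "j \<in> C")
    case True
    have "(\<Sum>r\<in>S. M r j) = (\<Sum>r<n. M r j)"
      using F3[OF True] Ssub by (intro sum.mono_neutral_left) auto
    thus ?thesis using F1[OF True] unfolding cs_def by simp
  next
    case False
    have "card (S - {j}) = (\<Sum>r\<in>S-{j}. M r j)" using F2 False j by simp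
    also have "\<dots> \<le> (\<Sum>r\<in>S. M r j)" using fS by (intro sum_mono2) auto
    finally show ?thesis by simp
  qed
  have "(\<Sum>j<n. min (b j) (card (S - {j}))) \<le> (\<Sum>j<n. \<Sum>r\<in>S. M r j)"
    using col by (intro sum_mono) auto
  also have "\<dots> = (\<Sum>r\<in>S. rs n M r)" unfolding rs_def by (rule sum.swap)
  also have "\<dots> < (\<Sum>r\<in>S. a r)"
  proof (rule sum_strict_mono_ex1[OF fS])
    show "\<forall>r\<in>S. rs n M r \<le> a r" using v Ssub unfolding valid_def by auto
    show "\<exists>r\<in>S. rs n M r < a r" using i0 unfolding S_def by auto
  qed
  finally show ?thesis using Ssub by blast
qed

lemma conc1:
  fixes b d m x :: int
  assumes "m \<le> b" "b \<le> m+x" "m \<le> d" "d \<le> m + x"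
  shows "x*min b d \<ge> x*m + (b-m)*(d-m)"
proof (cases "b \<le> d")
  case True
  have "(b-m)*(x-(d-m)) \<ge> 0" using assms by simp
  moreover have "x*b - (x*m + (b-m)*(d-m)) = (b-m)*(x-(d-m))" by (simp add: algebra_simps)
  ultimately show ?thesis using True by simp
next
  case False
  have "(d-m)*(x-(b-m)) \<ge> 0" using assms by simp
  moreover have "x*d - (x*m + (b-m)*(d-m)) = (d-m)*(x-(b-m))" by (simp add: algebra_simps)
  ultimately show ?thesis using False by simp
qed

lemma card_minus_sum:
  assumes S: "S \<subseteq> {..<n}"
  shows "(\<Sum>j<n. card (S - {j})) + card S = n * card S"
proof -
  have fS: "finite S" using S finite_subset by blast
  have "(\<Sum>j<n. if j \<in> S then 1 else 0) = (\<Sum>j\<in>{..<n} \<inter> S. (1::nat))"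
    by (rule sum.inter_restrict[symmetric]) simp
  also have "{..<n} \<inter> S = S" using S by blast
  finally have ind: "(\<Sum>j<n. if j \<in> S then 1 else 0) = card S" by simp
  have "\<And>j. card (S - {j}) + (if j \<in> S then 1 else 0) = card S"
    using fS by (auto simp: card_Diff_singleton card_gt_0_iff) (metis Suc_pred card_gt_0_iff empty_iff)
  hence "(\<Sum>j<n. card (S - {j}) + (if j \<in> S then 1 else 0)) = n * card S" by simp
  thus ?thesis using ind by (simp add: sum.distrib)
qed

lemma cut_ok:
  fixes n m Mx :: nat and E :: int
  assumes bnd: "\<forall>i<n. m \<le> a i \<and> a i \<le> Mx \<and> m \<le> b i \<and> b i \<le> Mx"
    and sums: "(\<Sum>i<n. a i) = (\<Sum>i<n. b i)" and Mxn: "Mx \<le> n - 1" and mMx: "m \<le> Mx"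
    and H: "(\<exists>k::int. k*(int Mx - int m) \<le> E \<and> E \<le> k^2 - 2*(int m+1)*k + int n*int m \<and> int m+1 \<le> k)
            \<or> int n * int m > (int m+1)^2 + E"
    and Edef: "E = int (\<Sum>i<n. b i) - int n * int m"
    and S: "S \<subseteq> {..<n}"
  shows "(\<Sum>r\<in>S. a r) \<le> (\<Sum>j<n. min (b j) (card (S - {j})))"
proof -
  define s where "s = card S"
  have fS: "finite S" using S finite_subset by blast
  have sn: "s \<le> n" using S unfolding s_def by (metis card_lessThan card_mono finite_lessThan)
  have Asm: "(\<Sum>r\<in>S. a r) \<le> s * Mx"
  proof -
    have "(\<Sum>r\<in>S. a r) \<le> (\<Sum>r\<in>S. Mx)" using bnd S by (intro sum_mono) auto
    thus ?thesis unfolding s_def by simp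
  qed
  consider "Mx + 1 \<le> s" | "s \<le> m" | "m + 1 \<le> s" "s \<le> Mx" by linarith
  thus ?thesis
  proof cases
    case 1
    have "(\<Sum>r\<in>S. a r) \<le> (\<Sum>r<n. a r)" using S by (intro sum_mono2) auto
    also have "\<dots> = (\<Sum>j<n. b j)" using sums .
    also have "\<dots> = (\<Sum>j<n. min (b j) (card (S - {j})))"
    proof (intro sum.cong refl)
      fix j assume "j \<in> {..<n}"
      have "card S - 1 \<le> card (S - {j})" using diff_card_le_card_Diff[of "{j}" S] by simp
      thus "b j = min (b j) (card (S - {j}))" using bnd \<open>j \<in> {..<n}\<close> 1 unfolding s_def by auto
    qed
    finally show ?thesis .
  next
    case 2
    have "(\<Sum>j<n. min (b j) (card (S - {j}))) = (\<Sum>j<n. card (S - {j}))"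
    proof (intro sum.cong refl)
      fix j assume "j \<in> {..<n}"
      have "card (S - {j}) \<le> card S" using fS by (simp add: card_mono)
      thus "min (b j) (card (S - {j})) = card (S - {j})" using bnd \<open>j \<in> {..<n}\<close> 2 unfolding s_def by auto
    qed
    moreover have "(\<Sum>j<n. card (S - {j})) + s = n * s" using card_minus_sum[OF S] unfolding s_def .
    moreover have "s * Mx \<le> s * (n - 1)" using Mxn by simp
    moreover have "s * (n - 1) + s = n * s" 
      using sn by (cases n) (auto simp: algebra_simps)
    ultimately show ?thesis using Asm by linarith
  next
    case 3
    define x where "x = Mx - m"
    define u where "u = s - m"
    have x1: "x \<ge> 1" and u1: "u \<ge> 1" and ux: "u \<le> x" using 3 unfolding x_def u_def by auto
    have sdef: "int s = int m + int u" and Mdef: "int Mx = int m + int x" using 3 unfolding u_def x_def by auto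
    define A where "A = (\<Sum>r\<in>S. a r)"
    define R where "R = (\<Sum>j<n. min (b j) (card (S - {j})))"
    define B where "B = (\<Sum>j\<in>S. int (b j) - int m)"
    have A1: "int A \<le> int s * (int m + int x)" using Asm Mdef unfolding A_def by (metis of_nat_le_iff of_nat_mult)
    have A2: "int A \<le> E + int s * int m"
    proof -
      have "(\<Sum>r\<in>{..<n}-S. m) \<le> (\<Sum>r\<in>{..<n}-S. a r)" using bnd by (intro sum_mono) auto
      moreover have "card ({..<n}-S) = n - s" using S fS unfolding s_def by (simp add: card_Diff_subset)
      moreover have "(\<Sum>r<n. a r) = A + (\<Sum>r\<in>{..<n}-S. a r)" unfolding A_def
        using sum.subset_diff[OF S finite_lessThan, of a] by simp
      ultimately have "A + (n - s) * m \<le> (\<Sum>r<n. b r)" using sums by simp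
      hence "int A + (int n - int s) * int m \<le> int (\<Sum>r<n. b r)" using sn
        by (metis of_nat_add of_nat_diff of_nat_le_iff of_nat_mult)
      thus ?thesis using Edef by (simp add: algebra_simps)
    qed
    have B0: "B \<le> E"
    proof -
      have "B \<le> (\<Sum>j<n. int (b j) - int m)" unfolding B_def using S bnd by (intro sum_mono2) auto
      also have "\<dots> = E" unfolding Edef by (simp add: sum_subtractf of_nat_sum)
      finally show ?thesis .
    qed
    have B1: "B \<le> int s * int x"
    proof -
      have "B \<le> (\<Sum>j\<in>S. int x)" unfolding B_def using S bnd Mdef by (intro sum_mono) force
      thus ?thesis unfolding s_def by simp
    qed
    have conc: "int x * int R \<ge> int n * int m * int x + E * int u - B"
    proof -
      have dj: "\<And>j. int (card (S - {j})) = int s - (if j \<in> S then 1 else 0)"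
        using fS 3 unfolding s_def by (auto simp: card_Diff_singleton)
      have "int x * int R = (\<Sum>j<n. int x * int (min (b j) (card (S - {j}))))"
        unfolding R_def by (simp add: of_nat_sum sum_distrib_left)
      also have "\<dots> \<ge> (\<Sum>j<n. int x * int m + (int (b j) - int m) * (int (card (S - {j})) - int m))"
      proof (intro sum_mono)
        fix j assume j: "j \<in> {..<n}"
        have "int x * min (int (b j)) (int (card (S - {j}))) \<ge> int x * int m + (int (b j) - int m) * (int (card (S - {j})) - int m)"
          by (rule conc1) (use bnd j Mdef dj 3 in auto)
        thus "int x * int m + (int (b j) - int m) * (int (card (S - {j})) - int m) \<le> int x * int (min (b j) (card (S - {j})))"
          by (auto simp: min_def split: if_splits)
      qed
      also have "(\<Sum>j<n. int x * int m + (int (b j) - int m) * (int (card (S - {j})) - int m))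
          = (\<Sum>j<n. int x * int m + (int (b j) - int m) * int u - (if j \<in> S then int (b j) - int m else 0))"
      proof (intro sum.cong refl)
        fix j
        have e: "int (card (S - {j})) - int m = int u - (if j \<in> S then 1 else 0)"
          by (cases "j \<in> S") (use dj[of j] sdef in auto)
        show "int x * int m + (int (b j) - int m) * (int (card (S - {j})) - int m)
          = int x * int m + (int (b j) - int m) * int u - (if j \<in> S then int (b j) - int m else 0)"
          by (simp only: e) (cases "j \<in> S", simp_all add: algebra_simps)
      qed
      also have "\<dots> = int n * int x * int m + (\<Sum>j<n. int (b j) - int m) * int u - B"
      proof -
        have "(\<Sum>j<n. (if j \<in> S then int (b j) - int m else 0)) = (\<Sum>j\<in>{..<n} \<inter> S. int (b j) - int m)"
          by (rule sum.inter_restrict[symmetric]) simp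
        also have "{..<n} \<inter> S = S" using S by blast
        finally have "(\<Sum>j<n. (if j \<in> S then int (b j) - int m else 0)) = B" unfolding B_def .
        moreover have "(\<Sum>j<n. (int (b j) - int m) * int u) = (\<Sum>j<n. int (b j) - int m) * int u"
          by (simp add: sum_distrib_right)
        ultimately show ?thesis by (simp add: sum.distrib sum_subtractf)
      qed
      also have "(\<Sum>j<n. int (b j) - int m) = E" unfolding Edef by (simp add: sum_subtractf of_nat_sum)
      finally show ?thesis by (simp add: algebra_simps)
    qed
    have mn: "int m + int x \<le> int n - 1" using Mxn Mdef 3 by linarith
    have "int x * int A \<le> int x * int R"
      using H
    proof
      assume "\<exists>k::int. k*(int Mx - int m) \<le> E \<and> E \<le> k^2 - 2*(int m+1)*k + int n*int m \<and> int m+1 \<le> k"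
      then obtain k where k: "k*int x \<le> E" "E \<le> k^2 - 2*(int m+1)*k + int n*int m" "int m+1 \<le> k"
        using Mdef by auto
      have E0: "0 \<le> E" using k x1 by (smt (verit) mult_nonneg_nonneg of_nat_0_le_iff)
      from arith_pos[of "int m" "int u" "int x" "int n" E k] k x1 u1 ux mn E0
      consider "(int m+int u)*(int m+int x)*int x \<le> int n*int m*int x + E*int u - (int m+int u)*int x"
        | "(E + (int m+int u)*int m)*int x \<le> int n*int m*int x + E*int u - (int m+int u)*int x" by force
      thus ?thesis
      proof cases
        case 1
        have "int x * int A \<le> int x * (int s * (int m + int x))" using A1 by (simp add: mult_left_mono)
        thus ?thesis using 1 conc B1 sdef by (simp add: algebra_simps)
      next
        case 2
        have "int x * int A \<le> int x * (E + int s * int m)" using A2 by (simp add: mult_left_mono)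
        thus ?thesis using 2 conc B1 sdef by (simp add: algebra_simps)
      qed
    next
      assume h: "int n * int m > (int m+1)^2 + E"
      have E0: "0 \<le> E" using B0 unfolding B_def using bnd S by (smt (verit) sum_nonneg subsetD lessThan_iff of_nat_le_iff)
      from arith_neg[of "int m" "int u" "int x" "int n" E] h x1 u1 ux mn E0
      consider "(int m+int u)*(int m+int x)*int x \<le> int n*int m*int x + E*int u - E"
        | "(E + (int m+int u)*int m)*int x \<le> int n*int m*int x + E*int u - E" by force
      thus ?thesis
      proof cases
        case 1
        have "int x * int A \<le> int x * (int s * (int m + int x))" using A1 by (simp add: mult_left_mono)
        thus ?thesis using 1 conc B0 sdef by (simp add: algebra_simps)
      next
        case 2
        have "int x * int A \<le> int x * (E + int s * int m)" using A2 by (simp add: mult_left_mono)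
        thus ?thesis using 2 conc B0 sdef by (simp add: algebra_simps)
      qed
    qed
    hence "int A \<le> int R" using x1 by simp
    hence "A \<le> R" by linarith
    thus ?thesis unfolding A_def R_def .
  qed
qed

lemma valid_tot_le: "valid n a b M \<Longrightarrow> tot n M \<le> (\<Sum>i<n. a i)"
  unfolding tot_def valid_def by (intro sum_mono) auto

lemma exists_max_valid:
  "\<exists>M. valid n a b M \<and> (\<forall>M'. valid n a b M' \<longrightarrow> tot n M' \<le> tot n M)"
proof -
  define Tots where "Tots = {tot n M | M. valid n a b M}"
  have fin: "finite Tots"
    by (rule finite_subset[of _ "{..(\<Sum>i<n. a i)}"]) (auto simp: Tots_def valid_tot_le)
  have "valid n a b (\<lambda>_ _. 0)" unfolding valid_def rs_def cs_def by simp
  hence ne: "Tots \<noteq> {}" unfolding Tots_def by blast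
  have "Max Tots \<in> Tots" using fin ne by (rule Max_in)
  hence "\<exists>M. valid n a b M \<and> Max Tots = tot n M" unfolding Tots_def by (smt (verit) mem_Collect_eq)
  then obtain M where M: "valid n a b M" "Max Tots = tot n M" by blast
  have "\<forall>M'. valid n a b M' \<longrightarrow> tot n M' \<le> tot n M"
  proof (intro allI impI)
    fix M' assume "valid n a b M'"
    hence "tot n M' \<in> Tots" unfolding Tots_def by blast
    hence "tot n M' \<le> Max Tots" using fin by (simp add: Max_ge)
    thus "tot n M' \<le> tot n M" using M(2) by simp
  qed
  thus ?thesis using M by blast
qed

theorem theorem6:
  fixes n :: nat and a b :: "nat \<Rightarrow> nat"
  assumes "n \<ge> 1"
    and "bidegree_sum n a b"
    and "min_bideg n a b \<le> n - 1"
    and "max_bideg n a b \<le>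
      min (let m = real (min_bideg n a b); c = avg_deg n a;
               D = (m + 1)\<^sup>2 + real n * (c - 2 * m);
               k = (if D \<ge> 0 then real_of_int \<lceil>m + 1 + sqrt D\<rceil> else 1)
           in \<lfloor>real n * (c - m) / k + m\<rfloor>) (int n - 1)"
  shows "graphic n a b"
proof -
  define m where "m = min_bideg n a b"
  define Mx where "Mx = max_bideg n a b"
  define X where "X = a ` {..<n} \<union> b ` {..<n}"
  have finX: "finite X" unfolding X_def by simp
  have n0: "0 < n" using assms(1) by simp
  have bnd: "\<forall>i<n. m \<le> a i \<and> a i \<le> Mx \<and> m \<le> b i \<and> b i \<le> Mx"
    unfolding m_def Mx_def min_bideg_def max_bideg_def using finX unfolding X_def
    by (auto intro: Min_le Max_ge)
  have mMx: "m \<le> Mx" using bnd n0 by force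
  have sums: "(\<Sum>i<n. a i) = (\<Sum>i<n. b i)" using assms(2) unfolding bidegree_sum_def .
  define T where "T = (\<Sum>i<n. b i)"
  define E where "E = int T - int n * int m"
  define c where "c = avg_deg n a"
  define D where "D = (real m + 1)\<^sup>2 + real n * (c - 2 * real m)"
  define kk where "kk = (if D \<ge> 0 then real_of_int \<lceil>real m + 1 + sqrt D\<rceil> else 1)"
  have h4: "int Mx \<le> \<lfloor>real n * (c - real m) / kk + real m\<rfloor>" "int Mx \<le> int n - 1"
    using assms(4) unfolding Let_def m_def[symmetric] Mx_def[symmetric] c_def[symmetric]
      D_def[symmetric] kk_def[symmetric] by auto
  have Mxn: "Mx \<le> n - 1" using h4(2) by linarith
  have cE: "real n * (c - real m) = real_of_int E"
    unfolding c_def avg_deg_def E_def T_def using n0 sums by (simp add: field_simps)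
  have DE: "D = (real m + 1)^2 + real_of_int E - real n * real m"
  proof -
    have "real n * (c - 2*real m) = real n*(c - real m) - real n * real m" by (simp add: algebra_simps)
    thus ?thesis unfolding D_def using cE by simp
  qed
  have H: "(\<exists>k::int. k*(int Mx - int m) \<le> E \<and> E \<le> k^2 - 2*(int m+1)*k + int n*int m \<and> int m+1 \<le> k)
            \<or> int n * int m > (int m+1)^2 + E"
  proof (cases "D \<ge> 0")
    case True
    define k where "k = \<lceil>real m + 1 + sqrt D\<rceil>"
    have kk: "kk = real_of_int k" unfolding kk_def k_def using True by simp
    have kge: "real_of_int k \<ge> real m + 1 + sqrt D" unfolding k_def by (rule le_of_int_ceiling)
    have sq0: "sqrt D \<ge> 0" using True by simp
    have kpos: "real_of_int k > 0" using kge sq0 by linarith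
    have "real_of_int (int Mx) \<le> real n * (c - real m) / kk + real m"
      using h4(1) le_floor_iff by blast
    hence "real Mx \<le> real_of_int E / real_of_int k + real m" using cE kk by simp
    hence "real Mx - real m \<le> real_of_int E / real_of_int k" by linarith
    hence "(real Mx - real m) * real_of_int k \<le> real_of_int E" using kpos by (simp add: pos_le_divide_eq)
    hence r1: "real_of_int (k*(int Mx - int m)) \<le> real_of_int E" by (simp add: algebra_simps)
    have "(sqrt D)^2 \<le> (real_of_int k - real m - 1)^2" using kge sq0 by (intro power_mono) auto
    hence "D \<le> (real_of_int k - real m - 1)^2" using True by simp
    hence r2: "real_of_int E \<le> real_of_int (k^2 - 2*(int m+1)*k + int n*int m)"
      using DE by (simp add: power2_eq_square algebra_simps)
    have r3: "int m + 1 \<le> k" using kge sq0 by linarith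
    have q1: "k*(int Mx - int m) \<le> E" using r1 by (simp only: of_int_le_iff)
    have q2: "E \<le> k^2 - 2*(int m+1)*k + int n*int m" using r2 by (simp only: of_int_le_iff)
    show ?thesis using q1 q2 r3 by blast
  next
    case False
    hence "real_of_int ((int m+1)^2 + E) < real_of_int (int n * int m)" using DE by simp
    thus ?thesis by (simp only: of_int_less_iff) simp
  qed
  have cutok: "\<And>S. S \<subseteq> {..<n} \<Longrightarrow> (\<Sum>r\<in>S. a r) \<le> (\<Sum>j<n. min (b j) (card (S - {j})))"
    by (rule cut_ok[OF bnd sums Mxn mMx H]) (simp add: E_def T_def)
  obtain M where v: "valid n a b M" and mx: "\<forall>M'. valid n a b M' \<longrightarrow> tot n M' \<le> tot n M"
    using exists_max_valid by blast
  have rows: "\<forall>i<n. rs n M i = a i"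
  proof (rule ccontr)
    assume "\<not> ?thesis"
    then obtain i0 where "i0 < n" "rs n M i0 \<noteq> a i0" by blast
    hence i0: "i0 < n" "rs n M i0 < a i0" using v unfolding valid_def by (auto simp: order_le_neq_trans)
    from cut[OF v mx i0] obtain S where S: "S \<subseteq> {..<n}"
      "(\<Sum>r\<in>S. a r) > (\<Sum>j<n. min (b j) (card (S - {j})))" by blast
    have "(\<Sum>r\<in>S. a r) \<le> (\<Sum>j<n. min (b j) (card (S - {j})))" by (rule cutok[OF S(1)])
    thus False using S(2) by linarith
  qed
  have cols: "\<forall>j<n. cs n M j = b j"
  proof (rule ccontr)
    assume "\<not> ?thesis"
    then obtain j0 where "j0 < n" "cs n M j0 \<noteq> b j0" by blast
    hence j0: "j0 < n" "cs n M j0 < b j0" using v unfolding valid_def by (auto simp: order_le_neq_trans)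
    have "(\<Sum>j<n. cs n M j) < (\<Sum>j<n. b j)"
      by (rule sum_strict_mono_ex1) (use v j0 in \<open>auto simp: valid_def\<close>)
    moreover have "(\<Sum>j<n. cs n M j) = (\<Sum>i<n. rs n M i)" unfolding cs_def rs_def by (rule sum.swap)
    moreover have "(\<Sum>i<n. rs n M i) = (\<Sum>i<n. a i)" using rows by simp
    ultimately show False using sums by simp
  qed
  show ?thesis unfolding graphic_def
  proof (intro exI[of _ M] conjI allI impI)
    fix i j assume "i<n" "j<n" thus "M i j \<in> {0,1}" using v unfolding valid_def by (auto simp: le_Suc_eq)
  next
    fix i assume "i<n" thus "M i i = 0" using v unfolding valid_def by auto
  next
    fix i assume "i<n" thus "(\<Sum>j<n. M i j) = a i" using rows unfolding rs_def by auto
  next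
    fix j assume "j<n" thus "(\<Sum>i<n. M i j) = b j" using cols unfolding cs_def by auto
  qed
qed

end
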